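(* For $\mu_\ast\in\mathbb{R}$ and $b_\ast\in\mathbb{R}$ consider the equation $1-\mu_\ast ze^{b_\ast(1-z)}=0$ in $z\in\mathbb{C}$, and define $$I(\mu_\ast):=\{b_\ast\in\mathbb{R}\mid\text{all solutions }z\text{ of }1-\mu_\ast ze^{b_\ast(1-z)}=0\text{ lie strictly outside the unit circle}\}.$$ Then: (1) if $-e^2<\mu_\ast<-1$, the set $I(\mu_\ast)$ is a non-empty open interval with $I(\mu_\ast)\subseteq(-\infty,0)$; (2) if $-e^2<\mu_{\ast,1}<\mu_{\ast,2}<-1$, then $I(\mu_{\ast,1})\subseteq I(\mu_{\ast,2})$. *)

theory Defs
  imports "HOL-Analysis.Analysis"
begin

definition I_set :: "real \<Rightarrow> real set" where
  "I_set mu = {b::real. \<forall>z::complex.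
     1 - complex_of_real mu * z * exp (complex_of_real b * (1 - z)) = 0 \<longrightarrow> cmod z > 1}"

end

theory Submission
  imports Defs "HOL-Analysis.Analysis"
begin
lemma sin_lt: fixes x::real assumes "0 < x" shows "sin x < x"
proof (cases "x < 2")
  case True
  have h: "0 < x/2" "x/2 < pi" using assms True pi_gt3 by auto
  have "sin (x/2) > 0" using sin_gt_zero h by auto
  moreover have "cos (x/2) < 1" using cos_monotone_0_pi[of 0 "x/2"] h by simp
  moreover have "sin (x/2) \<le> x/2" using sin_x_le_x[of "x/2"] h by auto
  moreover have "sin x = 2 * sin (x/2) * cos (x/2)" using sin_double[of "x/2"] by simp
  ultimately have "sin x < 2 * sin (x/2)"
    by (metis mult.right_neutral mult_less_cancel_left_pos zero_less_numeral mult_pos_pos)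
  then show ?thesis using \<open>sin (x/2) \<le> x/2\<close> by linarith
next
  case False then show ?thesis using sin_le_one[of x] by linarith
qed

lemma key1: fixes u::real assumes "0 < u" "u < pi" shows "u * cos u < sin u"
proof -
  have "(\<lambda>v. sin v - v * cos v) 0 < (\<lambda>v. sin v - v * cos v) u"
  proof (rule DERIV_pos_imp_increasing_open[OF assms(1)])
    fix x assume x: "0 < x" "x < u"
    show "\<exists>y. ((\<lambda>v. sin v - v * cos v) has_real_derivative y) (at x) \<and> 0 < y"
      apply (rule exI[of _ "x * sin x"])
      using x assms by (auto intro!: derivative_eq_intros sin_gt_zero mult_pos_pos)
  next
    show "continuous_on {0..u} (\<lambda>v. sin v - v * cos v)" by (intro continuous_intros)
  qed
  then show ?thesis by simp
qed

lemma mono_q: fixes a b::real assumes "0 < a" "a < b" "b < pi" shows "a / sin a < b / sin b"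
proof (rule DERIV_pos_imp_increasing_open[OF assms(2)])
  fix x assume x: "a < x" "x < b"
  have s: "sin x > 0" using x assms by (intro sin_gt_zero) auto
  have k: "x * cos x < sin x" using key1 x assms by auto
  show "\<exists>y. ((\<lambda>v. v / sin v) has_real_derivative y) (at x) \<and> 0 < y"
    apply (rule exI[of _ "(sin x - x * cos x) / (sin x)^2"])
    using s k by (auto intro!: derivative_eq_intros simp: power2_eq_square field_simps)
next
  have "\<forall>x\<in>{a..b}. sin x \<noteq> 0"
  proof
    fix x assume "x \<in> {a..b}" then have "sin x > 0" using assms by (intro sin_gt_zero) auto
    then show "sin x \<noteq> 0" by simp
  qed
  then show "continuous_on {a..b} (\<lambda>v. v / sin v)" by (intro continuous_intros) auto
qed

lemma cot_mono: fixes a b::real assumes "0 < a" "a < b" "b < pi"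
  shows "b * cos b / sin b < a * cos a / sin a"
proof (rule DERIV_neg_imp_decreasing_open[OF assms(2)])
  fix x assume x: "a < x" "x < b"
  have s: "sin x > 0" using x assms by (intro sin_gt_zero) auto
  have k: "sin x * cos x < x"
  proof -
    have "sin x * cos x \<le> sin x" using s cos_le_one[of x] by (simp add: mult_left_le)
    then show ?thesis using sin_lt[of x] x assms by linarith
  qed
  show "\<exists>y. ((\<lambda>v. v * cos v / sin v) has_real_derivative y) (at x) \<and> y < 0"
    apply (rule exI[of _ "(sin x * cos x - x) / (sin x)^2"])
    using s k apply (auto intro!: derivative_eq_intros simp: power2_eq_square field_simps)
    by (metis distrib_left mult.right_neutral sin_cos_squared_add3)
next
  have "\<forall>x\<in>{a..b}. sin x \<noteq> 0"
  proof
    fix x assume "x \<in> {a..b}" then have "sin x > 0" using assms by (intro sin_gt_zero) auto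
    then show "sin x \<noteq> 0" by simp
  qed
  then show "continuous_on {a..b} (\<lambda>v. v * cos v / sin v)" by (intro continuous_intros) auto
qed

lemma psi_mono: fixes a b::real assumes "0 < a" "a < b" "b < pi"
  shows "b * (1 + cos b) / sin b < a * (1 + cos a) / sin a"
proof (rule DERIV_neg_imp_decreasing_open[OF assms(2)])
  fix x assume x: "a < x" "x < b"
  have s: "sin x > 0" using x assms by (intro sin_gt_zero) auto
  have k: "sin x < x" using sin_lt[of x] x assms by linarith
  have c: "1 + cos x > 0" using cos_monotone_0_pi[of x pi] x assms by simp
  have neg: "(1 + cos x) * (sin x - x) / (sin x)^2 < 0"
    using s k c by (simp add: divide_neg_pos mult_pos_neg)
  have der: "((\<lambda>v. v * (1 + cos v) / sin v) has_real_derivative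
      (((1 + cos x) - x * sin x) * sin x - x * (1 + cos x) * cos x) / (sin x * sin x)) (at x)"
    using s by (auto intro!: derivative_eq_intros)
  have eq: "(((1 + cos x) - x * sin x) * sin x - x * (1 + cos x) * cos x) / (sin x * sin x)
     = (1 + cos x) * (sin x - x) / (sin x)^2"
  proof -
    have ss: "sin x * sin x = 1 - cos x * cos x" using sin_cos_squared_add3[of x] by linarith
    have "((1 + cos x) - x * sin x) * sin x - x * (1 + cos x) * cos x
       = (1 + cos x) * (sin x - x)"
      by (simp add: algebra_simps ss)
    then show ?thesis by (simp add: power2_eq_square)
  qed
  show "\<exists>y. ((\<lambda>v. v * (1 + cos v) / sin v) has_real_derivative y) (at x) \<and> y < 0"
    using der eq neg by metis
next
  have "\<forall>x\<in>{a..b}. sin x \<noteq> 0"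
  proof
    fix x assume "x \<in> {a..b}" then have "sin x > 0" using assms by (intro sin_gt_zero) auto
    then show "sin x \<noteq> 0" by simp
  qed
  then show "continuous_on {a..b} (\<lambda>v. v * (1 + cos v) / sin v)" by (intro continuous_intros) auto
qed

lemma lim0: "((\<lambda>s::real. sin s / s) \<longlongrightarrow> 1) (at 0)"
  using DERIV_D[OF DERIV_sin[of 0]] by simp

lemma lim1: "((\<lambda>s::real. s / sin s) \<longlongrightarrow> 1) (at_right 0)"
proof -
  have "((\<lambda>s::real. inverse (sin s / s)) \<longlongrightarrow> inverse 1) (at 0)"
    by (rule tendsto_inverse[OF lim0]) simp
  then have "((\<lambda>s::real. s / sin s) \<longlongrightarrow> 1) (at 0)" by simp
  then show ?thesis by (rule tendsto_mono[OF at_within_le_at])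
qed

lemma lim2: "((\<lambda>s::real. s * cos s / sin s) \<longlongrightarrow> 1) (at_right 0)"
proof -
  have "((\<lambda>s::real. cos s * (s / sin s)) \<longlongrightarrow> cos 0 * 1) (at_right 0)"
    by (intro tendsto_intros lim1)
  then show ?thesis by (simp add: mult.commute)
qed


lemma root_re: "Re (z * exp (complex_of_real \<beta> * z)) =
   exp (\<beta> * Re z) * (Re z * cos (\<beta> * Im z) - Im z * sin (\<beta> * Im z))"
  by (simp add: Re_exp Im_exp algebra_simps)

lemma root_im: "Im (z * exp (complex_of_real \<beta> * z)) =
   exp (\<beta> * Re z) * (Re z * sin (\<beta> * Im z) + Im z * cos (\<beta> * Im z))"
  by (simp add: Re_exp Im_exp algebra_simps)

lemma wexp_le: fixes a::real assumes "a > 0" shows "a * exp (-a) \<le> exp (-1)"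
proof -
  have "a \<le> exp (a - 1)" using exp_ge_add_one_self[of "a - 1"] by simp
  then have "a * exp (-a) \<le> exp (a - 1) * exp (-a)" by (simp add: mult_right_mono)
  also have "\<dots> = exp (-1)" by (simp flip: exp_add)
  finally show ?thesis .
qed

lemma bound_real:
  fixes \<beta> K w :: real
  assumes b: "\<beta> > 0" and w: "0 < w" "w \<le> 1" and K: "K = w * exp (- \<beta> * w)"
  shows "(\<beta> \<le> 1 \<longrightarrow> K \<le> exp (-\<beta>)) \<and>
         (\<forall>u. 0 < u \<and> u < pi \<and> \<beta> * sin u = u \<longrightarrow> K \<le> exp (- \<beta> * cos u))"
proof (intro conjI impI allI)
  assume b1: "\<beta> \<le> 1"
  have "w \<le> exp (w - 1)" using exp_ge_add_one_self[of "w - 1"] by simp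
  moreover have "exp (\<beta> * (1 - w)) \<le> exp (1 - w)"
  proof -
    have "\<beta> * (1 - w) \<le> 1 * (1 - w)" using b1 w by (intro mult_right_mono) auto
    then show ?thesis by simp
  qed
  ultimately have "w * exp (\<beta> * (1 - w)) \<le> exp (w - 1) * exp (1 - w)"
    using w by (intro mult_mono) auto
  also have "\<dots> = 1" by (simp flip: exp_add)
  finally have "w * exp (\<beta> * (1 - w)) \<le> 1" .
  then have "w * exp (\<beta> * (1 - w)) * exp (-\<beta>) \<le> exp (-\<beta>)" by simp
  moreover have "w * exp (\<beta> * (1 - w)) * exp (-\<beta>) = K"
    unfolding K by (simp add: mult.assoc flip: exp_add) (simp add: algebra_simps)
  ultimately show "K \<le> exp (-\<beta>)" by simp
next
  fix u assume u: "0 < u \<and> u < pi \<and> \<beta> * sin u = u"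
  have su: "sin u > 0" using u sin_gt_zero by auto
  have "sin u < u" using sin_lt u by auto
  have b1: "\<beta> > 1"
  proof (rule ccontr)
    assume "\<not> \<beta> > 1"
    then have "\<beta> * sin u \<le> 1 * sin u" using su by (intro mult_right_mono) auto
    then show False using u \<open>sin u < u\<close> by simp
  qed
  have "u * cos u < sin u" using key1 u by auto
  then have "\<beta> * cos u * sin u < sin u" using u by (metis mult.assoc mult.commute)
  then have bc: "\<beta> * cos u < 1" using su by simp
  have "(\<beta> * w) * exp (-(\<beta> * w)) \<le> exp (-1)" using wexp_le[of "\<beta> * w"] b w by simp
  then have "\<beta> * K \<le> exp (-1)" unfolding K by (simp add: algebra_simps)
  moreover have "1 * K \<le> \<beta> * K" using b1 w K by (intro mult_right_mono) auto
  ultimately have "K \<le> exp (-1)" by simp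
  also have "\<dots> < exp (- \<beta> * cos u)" using bc by simp
  finally show "K \<le> exp (- \<beta> * cos u)" by simp
qed


lemma bound_pos:
  fixes \<beta> K :: real and z :: complex
  assumes b: "\<beta> > 0" and K: "K > 0" and z1: "cmod z \<le> 1" and y0: "Im z \<ge> 0"
    and r: "z * exp (complex_of_real \<beta> * z) = - complex_of_real K"
  shows "(\<beta> \<le> 1 \<longrightarrow> K \<le> exp (-\<beta>)) \<and>
         (\<forall>u. 0 < u \<and> u < pi \<and> \<beta> * sin u = u \<longrightarrow> K \<le> exp (- \<beta> * cos u))"
proof -
  define x where "x = Re z"
  define y where "y = Im z"
  define E where "E = exp (\<beta> * x)"
  define s where "s = \<beta> * y"
  have E0: "E > 0" unfolding E_def by simp
  have sq: "sin s * sin s = 1 - cos s * cos s" using sin_cos_squared_add3[of s] by linarith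
  have re: "E * (x * cos s - y * sin s) = - K"
    using arg_cong[OF r, of Re] unfolding root_re x_def y_def E_def s_def by simp
  have im: "E * (x * sin s + y * cos s) = 0"
    using arg_cong[OF r, of Im] unfolding root_im x_def y_def E_def s_def by simp
  then have im': "x * sin s + y * cos s = 0" using E0 by simp
  have xy: "x^2 + y^2 \<le> 1"
    using z1 cmod_power2[of z] unfolding x_def y_def
    by (metis norm_ge_zero power_le_one)
  show ?thesis
  proof (cases "y = 0")
    case True
    then have "E * x = - K" using re by (simp add: s_def)
    then have "x < 0" using E0 K by (metis mult_pos_pos neg_less_0_iff_less not_less_iff_gr_or_eq mult_zero_right)
    define w where "w = - x"
    have w: "0 < w" "w \<le> 1" using \<open>x < 0\<close> xy True unfolding w_def
      by (auto simp: abs_square_le_1)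
    have "K = w * exp (- \<beta> * w)" using \<open>E * x = - K\<close> unfolding w_def E_def by (simp add: mult.commute)
    then show ?thesis using bound_real[OF b w] by blast
  next
    case False
    then have yp: "y > 0" using y0 y_def by simp
    then have sp: "s > 0" using b s_def by simp
    have "E * y = K * sin s"
    proof -
      have "sin s * (E * (x * cos s - y * sin s)) = - K * sin s" using re by simp
      moreover have "sin s * (E * (x * cos s - y * sin s))
          = E * (cos s * (x * sin s)) - E * y * (sin s)^2"
        by (simp add: algebra_simps power2_eq_square)
      moreover have "x * sin s = - y * cos s" using im' by linarith
      ultimately have "E * (cos s * (- y * cos s)) - E * y * (sin s)^2 = - K * sin s" by simp
      then show ?thesis
        by (simp add: algebra_simps power2_eq_square sq)
    qed
    then have ss: "sin s > 0" using E0 yp K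
      by (metis mult_pos_pos zero_less_mult_pos)
    have Kdef: "K = E * y / sin s" using \<open>E * y = K * sin s\<close> ss by (simp add: field_simps)
    have xdef: "x = - y * cos s / sin s" using im' ss by (simp add: field_simps)
    have ysin: "y \<le> sin s"
    proof -
      have "x^2 + y^2 = y^2 / (sin s)^2"
        unfolding xdef using ss sin_cos_squared_add[of s]
        by (simp add: field_simps power2_eq_square) (simp add: algebra_simps sq)
      then have "y^2 / (sin s)^2 \<le> 1" using xy by simp
      then have "y^2 \<le> (sin s)^2" using ss by (simp add: field_simps)
      then show ?thesis using ss yp by (simp add: power2_le_iff_abs_le abs_le_iff)
    qed
    have KE: "K \<le> E" unfolding Kdef using ysin ss E0 yp
      by (simp add: divide_le_eq mult_left_le)
    show ?thesis
    proof (intro conjI impI allI)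
      assume "\<beta> \<le> 1"
      then have "s \<le> y" unfolding s_def using yp by (simp add: mult_left_le_one_le)
      then show "K \<le> exp (-\<beta>)" using ysin sin_lt[OF sp] by linarith
    next
      fix u assume u: "0 < u \<and> u < pi \<and> \<beta> * sin u = u"
      have su: "sin u > 0" using u sin_gt_zero by auto
      define n where "n = \<lfloor>s / (2 * pi)\<rfloor>"
      define s0 where "s0 = s - (2 * pi) * of_int n"
      have "of_int n \<le> s / (2 * pi)" unfolding n_def by linarith
      then have s0ge: "s0 \<ge> 0" unfolding s0_def by (simp add: field_simps)
      have "s / (2 * pi) < of_int n + 1" unfolding n_def by linarith
      then have s0lt: "s0 < 2 * pi" unfolding s0_def by (simp add: field_simps)
      have n0: "n \<ge> 0" unfolding n_def using sp by simp
      have s0s: "s0 \<le> s" unfolding s0_def using n0 by simp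
      have sin0: "sin s0 = sin s" unfolding s0_def by (simp add: sin_diff)
      have cos0: "cos s0 = cos s" unfolding s0_def by (simp add: cos_diff)
      have s0pi: "s0 < pi"
      proof (rule ccontr)
        assume "\<not> s0 < pi"
        then have "sin s0 \<le> 0" using sin_le_zero s0lt by auto
        then show False using sin0 ss by simp
      qed
      have s0p: "s0 > 0" using sin0 ss s0ge by (cases "s0 = 0") auto
      have "s \<le> \<beta> * sin s" using ysin b unfolding s_def by simp
      then have "s0 \<le> \<beta> * sin s0" using s0s sin0 by simp
      then have "s0 * sin u \<le> (\<beta> * sin s0) * sin u" using su by (intro mult_right_mono) auto
      also have "\<dots> = u * sin s0" using u by (metis mult.assoc mult.commute)
      finally have "s0 * sin u \<le> u * sin s0" .
      then have q: "s0 / sin s0 \<le> u / sin u" using su ss sin0 by (simp add: field_simps)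
      have s0u: "s0 \<le> u"
      proof (rule ccontr)
        assume "\<not> s0 \<le> u"
        then have "u / sin u < s0 / sin s0" using mono_q[of u s0] u s0pi by simp
        then show False using q by simp
      qed
      have xle: "x \<le> - cos u"
      proof (cases "cos s0 < 0")
        case True
        have "x = - (y / sin s) * cos s" unfolding xdef by simp
        also have "\<dots> \<le> - cos s"
        proof -
          have "(y / sin s) * (- cos s) \<le> 1 * (- cos s)"
            using ysin ss yp True cos0 by (intro mult_right_mono) (auto simp: divide_le_eq)
          then show ?thesis by simp
        qed
        also have "\<dots> \<le> - cos u" using cos_monotone_0_pi_le[of s0 u] s0u s0ge u cos0 by simp
        finally show ?thesis .
      next
        case False
        show ?thesis
        proof (cases "cos u \<le> 0")
          case True
          have "x \<le> 0" unfolding xdef using False cos0 yp ss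
            by (simp add: divide_nonpos_pos)
          then show ?thesis using True by simp
        next
          case cu: False
          have "u * cos u / sin u \<le> s0 * cos s0 / sin s0"
            using cot_mono[of s0 u] s0p s0u u by (cases "s0 = u") auto
          also have "\<dots> \<le> s * cos s0 / sin s0"
            using s0s False ss sin0 by (intro divide_right_mono mult_right_mono) auto
          finally have "u * cos u / sin u \<le> s * cos s / sin s" using sin0 cos0 by simp
          moreover have "u * cos u / sin u = \<beta> * cos u" using u su by (simp add: field_simps)
          moreover have "s * cos s / sin s = \<beta> * (- x)" unfolding xdef s_def by simp
          ultimately have "\<beta> * cos u \<le> \<beta> * (- x)" by simp
          then have "cos u \<le> - x" using b mult_le_cancel_left_pos by blast
          then show ?thesis by simp
        qed
      qed
      have "\<beta> * x \<le> \<beta> * (- cos u)" using xle b by (intro mult_left_mono) auto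
      then have "E \<le> exp (- \<beta> * cos u)" unfolding E_def by simp
      then show "K \<le> exp (- \<beta> * cos u)" using KE by simp
    qed
  qed
qed


lemma bound:
  fixes \<beta> K :: real and z :: complex
  assumes b: "\<beta> > 0" and K: "K > 0" and z1: "cmod z \<le> 1"
    and r: "z * exp (complex_of_real \<beta> * z) = - complex_of_real K"
  shows "(\<beta> \<le> 1 \<longrightarrow> K \<le> exp (-\<beta>)) \<and>
         (\<forall>u. 0 < u \<and> u < pi \<and> \<beta> * sin u = u \<longrightarrow> K \<le> exp (- \<beta> * cos u))"
proof (cases "Im z \<ge> 0")
  case True then show ?thesis using bound_pos[OF b K z1 True r] by blast
next
  case False
  have "cnj (z * exp (complex_of_real \<beta> * z)) = cnj z * exp (complex_of_real \<beta> * cnj z)"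
    by (simp add: exp_cnj)
  then have r': "cnj z * exp (complex_of_real \<beta> * cnj z) = - complex_of_real K"
    using r by simp
  have "Im (cnj z) \<ge> 0" using False by simp
  moreover have "cmod (cnj z) \<le> 1" using z1 by simp
  ultimately show ?thesis using bound_pos[OF b K _ _ r'] by blast
qed

definition AA :: "real \<Rightarrow> real \<Rightarrow> bool" where
  "AA \<beta> K = (\<exists>z::complex. cmod z \<le> 1 \<and> z * exp (complex_of_real \<beta> * z) = - complex_of_real K)"

lemma AA_real:
  fixes \<beta> w K :: real
  assumes "0 \<le> w" "w \<le> 1" "K = w * exp (- \<beta> * w)"
  shows "AA \<beta> K"
  unfolding AA_def
proof (intro exI conjI)
  show "cmod (complex_of_real (- w)) \<le> 1" using assms by simp
  have "complex_of_real (- w) * exp (complex_of_real \<beta> * complex_of_real (- w))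
      = complex_of_real (- (w * exp (- \<beta> * w)))"
    by (simp flip: exp_of_real)
  then show "complex_of_real (- w) * exp (complex_of_real \<beta> * complex_of_real (- w)) = - complex_of_real K"
    using assms by simp
qed

lemma L2a:
  fixes \<beta> K :: real
  assumes "\<beta> > 0" "\<beta> \<le> 1" "0 < K" "K \<le> exp (-\<beta>)"
  shows "AA \<beta> K"
proof -
  have "\<exists>w. 0 \<le> w \<and> w \<le> 1 \<and> (\<lambda>w. w * exp (- \<beta> * w)) w = K"
    using assms by (intro IVT') (auto intro!: continuous_intros)
  then obtain w where "0 \<le> w" "w \<le> 1" "K = w * exp (- \<beta> * w)" by auto
  then show ?thesis using AA_real by blast
qed

lemma L2b:
  fixes \<beta> K u :: real
  assumes b: "\<beta> > 1" and u: "0 < u" "u < pi" "\<beta> * sin u = u"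
    and K: "0 < K" "K \<le> exp (- \<beta> * cos u)"
  shows "AA \<beta> K"
proof (cases "K \<le> exp (-1) / \<beta>")
  case True
  have "\<exists>w. 0 \<le> w \<and> w \<le> 1 / \<beta> \<and> (\<lambda>w. w * exp (- \<beta> * w)) w = K"
    using True K b by (intro IVT') (auto intro!: continuous_intros)
  then obtain w where "0 \<le> w" "w \<le> 1 / \<beta>" "K = w * exp (- \<beta> * w)" by auto
  moreover have "1 / \<beta> \<le> 1" using b by simp
  ultimately have "w \<le> 1" by linarith
  then show ?thesis using AA_real \<open>0 \<le> w\<close> \<open>K = w * exp (- \<beta> * w)\<close> by blast
next
  case False
  define F where "F = (\<lambda>s. s / (\<beta> * sin s) * exp (- (s * cos s / sin s)))"
  have su: "sin u > 0" using u sin_gt_zero by auto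
  have "((\<lambda>s. (1 / \<beta>) * (s / sin s) * exp (- (s * cos s / sin s))) \<longlongrightarrow> (1 / \<beta>) * 1 * exp (- 1)) (at_right 0)"
    by (intro tendsto_intros lim1 lim2)
  moreover have "\<And>s. (1 / \<beta>) * (s / sin s) * exp (- (s * cos s / sin s)) = F s"
    unfolding F_def by simp
  ultimately have lim: "(F \<longlongrightarrow> exp (-1) / \<beta>) (at_right 0)" by simp
  have "eventually (\<lambda>s. F s < K) (at_right 0)"
    using order_tendstoD(2)[OF lim] False by simp
  then obtain d where d: "d > 0" "\<And>s. s > 0 \<Longrightarrow> s < d \<Longrightarrow> F s < K"
    unfolding eventually_at_right_field by auto
  define e where "e = min (d / 2) (u / 2)"
  have e: "0 < e" "e < d" "e < u" using d u unfolding e_def by auto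
  have Fe: "F e < K" using d e by auto
  have Fu: "F u = exp (- \<beta> * cos u)"
  proof -
    have "u / (\<beta> * sin u) = 1" using u su by simp
    moreover have "u * cos u / sin u = \<beta> * cos u" using u su by (simp add: field_simps)
    ultimately show ?thesis unfolding F_def using u by simp
  qed
  have cont: "continuous_on {e..u} F"
  proof -
    have "\<forall>x\<in>{e..u}. sin x \<noteq> 0"
    proof
      fix x assume "x \<in> {e..u}" then have "sin x > 0" using e u by (intro sin_gt_zero) auto
      then show "sin x \<noteq> 0" by simp
    qed
    then show ?thesis unfolding F_def using b by (intro continuous_intros) auto
  qed
  obtain s where s: "e \<le> s" "s \<le> u" "F s = K"
    using IVT'[of F e K u, OF _ _ _ cont] Fe Fu K e by auto
  have sp: "0 < s" "s < pi" using s e u by auto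
  have ss: "sin s > 0" using sp sin_gt_zero by auto
  have sq: "sin s * sin s = 1 - cos s * cos s" using sin_cos_squared_add3[of s] by linarith
  have q: "s / sin s \<le> \<beta>"
  proof (cases "s = u")
    case True then show ?thesis using u su by (simp add: field_simps)
  next
    case False
    then have "s / sin s < u / sin u" using mono_q[of s u] sp s u by simp
    also have "u / sin u = \<beta>" using u su by (simp add: field_simps)
    finally show ?thesis by simp
  qed
  define x where "x = - (s / \<beta>) * cos s / sin s"
  define y where "y = s / \<beta>"
  define z where "z = Complex x y"
  have by_: "\<beta> * y = s" unfolding y_def using b by simp
  have "z * exp (complex_of_real \<beta> * z) = - complex_of_real K"
  proof (rule complex_eqI)
    have "x * cos s - y * sin s = - (s / \<beta>) / sin s"
      unfolding x_def y_def using ss b by (simp add: field_simps power2_eq_square sq)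
    moreover have "\<beta> * x = - (s * cos s / sin s)" unfolding x_def using b by simp
    ultimately have "exp (\<beta> * x) * (x * cos s - y * sin s) = exp (- (s * cos s / sin s)) * (- (s / \<beta>) / sin s)"
      by simp
    also have "\<dots> = - F s" unfolding F_def by simp
    finally have "exp (\<beta> * x) * (x * cos s - y * sin s) = - F s" .
    then show "Re (z * exp (complex_of_real \<beta> * z)) = Re (- complex_of_real K)"
      unfolding root_re z_def using by_ s by simp
    have "x * sin s + y * cos s = 0"
      unfolding x_def y_def using ss by (simp add: field_simps)
    then show "Im (z * exp (complex_of_real \<beta> * z)) = Im (- complex_of_real K)"
      unfolding root_im z_def using by_ by simp
  qed
  moreover have "cmod z \<le> 1"
  proof -
    have "x^2 + y^2 = (s / \<beta>)^2 * ((sin s)^2 + (cos s)^2) / (sin s)^2"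
      unfolding x_def y_def using ss b by (simp add: field_simps power2_eq_square) (simp add: algebra_simps sq)
    also have "\<dots> = (s / (\<beta> * sin s))^2" by (simp add: power_divide power_mult_distrib)
    finally have "x^2 + y^2 = (s / (\<beta> * sin s))^2" .
    moreover have "s / (\<beta> * sin s) \<le> 1" using q b ss sp by (simp add: field_simps)
    moreover have "s / (\<beta> * sin s) \<ge> 0" using b ss sp by simp
    ultimately have "x^2 + y^2 \<le> 1" by (simp add: power_le_one)
    then show ?thesis unfolding z_def complex_norm by simp
  qed
  ultimately show ?thesis unfolding AA_def by blast
qed


lemma u_exists: fixes \<beta>::real assumes b: "\<beta> > 1" shows "\<exists>u. 0 < u \<and> u < pi \<and> \<beta> * sin u = u"
proof -
  define u0 where "u0 = arccos (1 / \<beta>)"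
  have "0 < 1 / \<beta>" "1 / \<beta> < 1" using b by auto
  then have "-1 < 1 / \<beta>" "1 / \<beta> < 1" by linarith+
  then have ab: "0 < u0" "u0 < pi" unfolding u0_def using arccos_lt_bounded[of "1/\<beta>"] by auto
  have cu0: "cos u0 = 1 / \<beta>" unfolding u0_def using \<open>-1 < 1 / \<beta>\<close> \<open>1 / \<beta> < 1\<close> by simp
  have "u0 * cos u0 < sin u0" using key1 ab by auto
  then have "u0 < \<beta> * sin u0" using cu0 b by (simp add: field_simps)
  then have "\<exists>u. u0 \<le> u \<and> u \<le> pi \<and> (\<lambda>v. v - \<beta> * sin v) u = 0"
    using ab by (intro IVT') (auto intro!: continuous_intros)
  then obtain u where u: "u0 \<le> u" "u \<le> pi" "u - \<beta> * sin u = 0" by auto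
  have "u \<noteq> pi" using u by auto
  then show ?thesis using u ab by (intro exI[of _ u]) auto
qed

lemma u_unique:
  fixes \<beta> u1 u2 :: real
  assumes "0 < u1" "u1 < pi" "\<beta> * sin u1 = u1" "0 < u2" "u2 < pi" "\<beta> * sin u2 = u2"
  shows "u1 = u2"
proof -
  have s1: "sin u1 > 0" "sin u2 > 0" using assms sin_gt_zero by auto
  have e1: "u1 / sin u1 = \<beta>" "u2 / sin u2 = \<beta>" using assms s1 by (auto simp: field_simps)
  show ?thesis
  proof (rule ccontr)
    assume "u1 \<noteq> u2"
    then have "u1 < u2 \<or> u2 < u1" by auto
    then show False using mono_q[of u1 u2] mono_q[of u2 u1] assms e1 by auto
  qed
qed

definition ub :: "real \<Rightarrow> real" where
  "ub \<beta> = (THE u. 0 < u \<and> u < pi \<and> \<beta> * sin u = u)"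

lemma ub: assumes "\<beta> > 1" shows "0 < ub \<beta> \<and> ub \<beta> < pi \<and> \<beta> * sin (ub \<beta>) = ub \<beta>"
proof -
  obtain u where u: "0 < u \<and> u < pi \<and> \<beta> * sin u = u" using u_exists assms by blast
  have "ub \<beta> = u" unfolding ub_def
    by (rule the_equality) (use u u_unique in blast)+
  then show ?thesis using u by simp
qed

definition HH :: "real \<Rightarrow> real" where
  "HH \<beta> = (if \<beta> \<le> 1 then 2 * \<beta> else \<beta> * (1 + cos (ub \<beta>)))"

lemma AA_char:
  fixes \<beta> K :: real assumes b: "\<beta> > 0" and K: "K > 0"
  shows "AA \<beta> K \<longleftrightarrow> K \<le> exp (\<beta> - HH \<beta>)"
proof (cases "\<beta> \<le> 1")
  case True
  have e: "exp (\<beta> - HH \<beta>) = exp (-\<beta>)" using True unfolding HH_def by simp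
  show ?thesis unfolding e
  proof
    assume "AA \<beta> K"
    then obtain z where "cmod z \<le> 1" "z * exp (complex_of_real \<beta> * z) = - complex_of_real K"
      unfolding AA_def by blast
    then show "K \<le> exp (-\<beta>)" using bound[OF b K] True by blast
  next
    assume "K \<le> exp (-\<beta>)" then show "AA \<beta> K" using L2a b K True by blast
  qed
next
  case False
  then have b1: "\<beta> > 1" by simp
  note u = ub[OF b1]
  have e: "exp (\<beta> - HH \<beta>) = exp (- \<beta> * cos (ub \<beta>))" using False unfolding HH_def
    by (simp add: algebra_simps)
  show ?thesis unfolding e
  proof
    assume "AA \<beta> K"
    then obtain z where "cmod z \<le> 1" "z * exp (complex_of_real \<beta> * z) = - complex_of_real K"
      unfolding AA_def by blast
    then show "K \<le> exp (- \<beta> * cos (ub \<beta>))" using bound[OF b K] u by blast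
  next
    assume "K \<le> exp (- \<beta> * cos (ub \<beta>))" then show "AA \<beta> K" using L2b b1 u K by blast
  qed
qed

lemma eqv:
  fixes \<mu> b :: real and z :: complex assumes m: "\<mu> < 0"
  shows "(1 - complex_of_real \<mu> * z * exp (complex_of_real b * (1 - z)) = 0) \<longleftrightarrow>
         z * exp (complex_of_real (-b) * z) = - complex_of_real (exp (-b) / (-\<mu>))"
proof -
  have a: "complex_of_real b * (1 - z) = complex_of_real b + complex_of_real (-b) * z"
    by (simp add: algebra_simps)
  have e: "exp (complex_of_real b * (1 - z)) = complex_of_real (exp b) * exp (complex_of_real (-b) * z)"
    unfolding a exp_add by (simp add: exp_of_real)
  have nz: "complex_of_real \<mu> * complex_of_real (exp b) \<noteq> 0" using m by simp
  have r: "- complex_of_real (exp (-b) / (-\<mu>)) = 1 / (complex_of_real \<mu> * complex_of_real (exp b))"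
    using m by (simp add: exp_minus field_simps)
  show ?thesis unfolding e r using nz
    by (auto simp: field_simps)
qed

lemma fr: fixes A t H :: real assumes "A > 0" "t > 0" "H > 0"
  shows "(A / t \<le> A / H) \<longleftrightarrow> (H \<le> t)"
proof -
  have "(A / t \<le> A / H) \<longleftrightarrow> A * H \<le> A * t" using assms
    by (simp add: divide_le_eq le_divide_eq mult.commute mult.left_commute)
  also have "\<dots> \<longleftrightarrow> H \<le> t" using assms by simp
  finally show ?thesis .
qed

lemma I_char:
  fixes \<mu> b :: real assumes m: "\<mu> < 0" and b: "b < 0"
  shows "b \<in> I_set \<mu> \<longleftrightarrow> - \<mu> < exp (HH (-b))"
proof -
  have K: "exp (-b) / (-\<mu>) > 0" using m divide_pos_neg[of "exp (-b)" \<mu>] by simp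
  have "b \<in> I_set \<mu> \<longleftrightarrow> \<not> (\<exists>z. cmod z \<le> 1 \<and>
      1 - complex_of_real \<mu> * z * exp (complex_of_real b * (1 - z)) = 0)"
    unfolding I_set_def mem_Collect_eq by (meson not_le)
  also have "\<dots> \<longleftrightarrow> \<not> AA (-b) (exp (-b) / (-\<mu>))"
    unfolding AA_def by (simp only: eqv[OF m])
  also have "\<dots> \<longleftrightarrow> \<not> exp (-b) / (-\<mu>) \<le> exp (-b - HH (-b))"
    using AA_char[OF _ K] b by simp
  also have "\<dots> \<longleftrightarrow> - \<mu> < exp (HH (-b))"
  proof -
    have "exp (-b - HH (-b)) = exp (-b) / exp (HH (-b))" by (simp add: exp_diff)
    then show ?thesis using fr[of "exp (-b)" "-\<mu>" "exp (HH (-b))"] m by (simp add: not_le)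
  qed
  finally show ?thesis .
qed

lemma notI_nonneg:
  fixes \<mu> b :: real assumes m: "\<mu> < -1" and b: "b \<ge> 0"
  shows "b \<notin> I_set \<mu>"
proof -
  define f where "f = (\<lambda>x::real. \<mu> * x * exp (b * (1 - x)))"
  have "f (-1) = - \<mu> * exp (2 * b)" unfolding f_def by simp
  moreover have "exp (2 * b) \<ge> 1" using b by simp
  ultimately have "f (-1) \<ge> 1" using m
    by (smt (verit) mult_le_cancel_left1)
  moreover have "f 0 = 0" unfolding f_def by simp
  ultimately have "\<exists>x. -1 \<le> x \<and> x \<le> 0 \<and> f x = 1"
    by (intro IVT2') (auto simp: f_def intro!: continuous_intros)
  then obtain x where x: "-1 \<le> x" "x \<le> 0" "f x = 1" by auto
  have "1 - complex_of_real \<mu> * complex_of_real x * exp (complex_of_real b * (1 - complex_of_real x))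
     = complex_of_real (1 - f x)"
    unfolding f_def by (simp flip: exp_of_real)
  then have "1 - complex_of_real \<mu> * complex_of_real x * exp (complex_of_real b * (1 - complex_of_real x)) = 0"
    using x by simp
  moreover have "\<not> cmod (complex_of_real x) > 1" using x by simp
  ultimately show ?thesis unfolding I_set_def by blast
qed

lemma H_dec: fixes b1 b2 :: real assumes "1 < b2" "b2 \<le> b1" shows "HH b1 \<le> HH b2"
proof -
  note u1 = ub[of b1] and u2 = ub[of b2]
  have p1: "0 < ub b1" "ub b1 < pi" "b1 * sin (ub b1) = ub b1" using u1 assms by auto
  have p2: "0 < ub b2" "ub b2 < pi" "b2 * sin (ub b2) = ub b2" using u2 assms by auto
  have s: "sin (ub b1) > 0" "sin (ub b2) > 0" using p1 p2 sin_gt_zero by auto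
  have q1: "ub b1 / sin (ub b1) = b1" using p1 s by (simp add: field_simps)
  have q2: "ub b2 / sin (ub b2) = b2" using p2 s by (simp add: field_simps)
  have le: "ub b2 \<le> ub b1"
  proof (rule ccontr)
    assume "\<not> ub b2 \<le> ub b1"
    then have "ub b1 / sin (ub b1) < ub b2 / sin (ub b2)" using mono_q p1 p2 by simp
    then show False using q1 q2 assms by simp
  qed
  have h1: "HH b1 = ub b1 * (1 + cos (ub b1)) / sin (ub b1)"
  proof -
    have "HH b1 = (ub b1 / sin (ub b1)) * (1 + cos (ub b1))" unfolding HH_def using assms q1 by simp
    then show ?thesis by simp
  qed
  have h2: "HH b2 = ub b2 * (1 + cos (ub b2)) / sin (ub b2)"
  proof -
    have "HH b2 = (ub b2 / sin (ub b2)) * (1 + cos (ub b2))" unfolding HH_def using assms q2 by simp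
    then show ?thesis by simp
  qed
  show ?thesis unfolding h1 h2
    using psi_mono[of "ub b2" "ub b1"] p1 p2 le by (cases "ub b2 = ub b1") auto
qed

lemma I_open: fixes \<mu> :: real shows "open (I_set \<mu>)"
proof -
  define T where "T = {p :: complex \<times> real.
     1 - complex_of_real \<mu> * fst p * exp (complex_of_real (snd p) * (1 - fst p)) = 0}"
  have cT: "closed T" unfolding T_def
    by (intro closed_Collect_eq continuous_intros)
  have "closed {y. \<exists>x. x \<in> cball (0::complex) 1 \<and> (x, y) \<in> T}"
    by (rule closed_compact_projection[OF compact_cball cT])
  moreover have "{y. \<exists>x. x \<in> cball (0::complex) 1 \<and> (x, y) \<in> T} = - I_set \<mu>"
    unfolding T_def I_set_def by (auto simp: not_less)
  ultimately show ?thesis by (metis open_Compl double_compl closed_def)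
qed

theorem corollary5p4:
  shows "(\<forall>mu::real. - exp 2 < mu \<and> mu < -1 \<longrightarrow>
            I_set mu \<noteq> {} \<and> open (I_set mu) \<and> is_interval (I_set mu) \<and>
            I_set mu \<subseteq> {..<0})
       \<and> (\<forall>mu1 mu2::real. - exp 2 < mu1 \<and> mu1 < mu2 \<and> mu2 < -1 \<longrightarrow>
            I_set mu1 \<subseteq> I_set mu2)"
proof (intro conjI allI impI)
  fix mu :: real assume m: "- exp 2 < mu \<and> mu < -1"
  have neg: "I_set mu \<subseteq> {..<0}"
  proof
    fix b assume "b \<in> I_set mu"
    then show "b \<in> {..<0}" using notI_nonneg[of mu b] m by (cases "b \<ge> 0") auto
  qed
  have "(-1::real) \<in> I_set mu"
    using I_char[of mu "-1"] m unfolding HH_def by simp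
  then show "I_set mu \<noteq> {}" by blast
  show "open (I_set mu)" by (rule I_open)
  show "I_set mu \<subseteq> {..<0}" by (rule neg)
  show "is_interval (I_set mu)" unfolding is_interval_1
  proof (intro ballI allI impI)
    fix a c x assume a: "a \<in> I_set mu" and c: "c \<in> I_set mu" and x: "a \<le> x \<and> x \<le> c"
    have neg3: "a < 0" "c < 0" "x < 0" using a c x neg by auto
    have ha: "- mu < exp (HH (-a))" using I_char[of mu a] a neg3 m by simp
    have hc: "- mu < exp (HH (-c))" using I_char[of mu c] c neg3 m by simp
    have "- mu < exp (HH (-x))"
    proof (cases "-x \<le> 1")
      case True
      then have "HH (-c) \<le> HH (-x)" unfolding HH_def using x by auto
      then show ?thesis using hc by (meson exp_le_cancel_iff less_le_trans)
    next
      case False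
      then have "HH (-a) \<le> HH (-x)" using H_dec[of "-x" "-a"] x by simp
      then show ?thesis using ha by (meson exp_le_cancel_iff less_le_trans)
    qed
    then show "x \<in> I_set mu" using I_char[of mu x] neg3 m by simp
  qed
next
  fix mu1 mu2 :: real assume m: "- exp 2 < mu1 \<and> mu1 < mu2 \<and> mu2 < -1"
  show "I_set mu1 \<subseteq> I_set mu2"
  proof
    fix b assume b: "b \<in> I_set mu1"
    have "b < 0" using notI_nonneg[of mu1 b] m b by (cases "b \<ge> 0") auto
    then show "b \<in> I_set mu2" using I_char[of mu1 b] I_char[of mu2 b] b m by simp
  qed
qed

end
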